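(* Let $q\ge2$ and let $W$ be a $q$-ary symmetric channel on an alphabet $\mathcal{X}=\mathcal{Y}$ with $|\mathcal{X}|=q$, i.e., $W(y|x)=v$ if $y=x$ and $W(y|x)=u$ if $y\ne x$, where $u,v\in[0,1]$ and $v=1-(q-1)u$. Then $$\eta_\infty(W):=\sup_{P_0,P_1\in\Delta(\mathcal{X})}\frac{D_\infty(Q_0\|Q_1)}{D_\infty(P_0\|P_1)}=\frac{|v-u|}{\max\{u,v\}},$$ where $Q_i(y)=\sum_xP_i(x)W(y|x)$. Furthermore, this supremum is achieved in the limit by degenerate distributions (binary input pairs that both converge to the same point mass).
   Context: $\Delta(\mathcal{X})$ is the probability simplex on $\mathcal{X}$; $D_\infty(P\|Q)=\log\max_x\frac{P(x)}{Q(x)}$ is the Rényi divergence of order infinity. *)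

theory Defs
  imports "HOL-Analysis.Analysis"
begin

definition prob_simplex :: "('a::finite \<Rightarrow> real) set" where
  "prob_simplex = {P. (\<forall>x. 0 \<le> P x) \<and> (\<Sum>x\<in>UNIV. P x) = 1}"

text \<open>Renyi divergence of order infinity, D(P||Q) = log max_x P(x)/Q(x),
  meaningful (finite) when the support of P is contained in that of Q.
  Natural logarithm (the ratio of divergences does not depend on the base).\<close>
definition Dinf :: "('a::finite \<Rightarrow> real) \<Rightarrow> ('a \<Rightarrow> real) \<Rightarrow> real" where
  "Dinf P Q = ln (Max ((\<lambda>x. P x / Q x) ` UNIV))"

definition qsc :: "real \<Rightarrow> real \<Rightarrow> 'a \<Rightarrow> 'a \<Rightarrow> real" where
  "qsc u v x y = (if y = x then v else u)"

definition out_dist :: "('a::finite \<Rightarrow> 'a \<Rightarrow> real) \<Rightarrow> ('a \<Rightarrow> real) \<Rightarrow> 'a \<Rightarrow> real" where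
  "out_dist W P y = (\<Sum>x\<in>UNIV. P x * W x y)"

text \<open>Admissible input pairs: distributions with 0 < D(P0||P1) < infinity,
  i.e. P0 \<noteq> P1 and supp P0 \<subseteq> supp P1.\<close>
definition admissible_pairs :: "(('a::finite \<Rightarrow> real) \<times> ('a \<Rightarrow> real)) set" where
  "admissible_pairs = {(P0, P1). P0 \<in> prob_simplex \<and> P1 \<in> prob_simplex \<and> P0 \<noteq> P1 \<and>
      (\<forall>x. P1 x = 0 \<longrightarrow> P0 x = 0)}"

definition contraction_ratio ::
  "('a::finite \<Rightarrow> 'a \<Rightarrow> real) \<Rightarrow> ('a \<Rightarrow> real) \<Rightarrow> ('a \<Rightarrow> real) \<Rightarrow> real" where
  "contraction_ratio W P0 P1 = Dinf (out_dist W P0) (out_dist W P1) / Dinf P0 P1"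

definition eta_inf :: "('a::finite \<Rightarrow> 'a \<Rightarrow> real) \<Rightarrow> real" where
  "eta_inf W = (SUP PP \<in> admissible_pairs. contraction_ratio W (fst PP) (snd PP))"

end

theory Submission
  imports Defs
begin

lemma pt_bound:
  fixes m n M x y :: real
  assumes "0 \<le> n" "n \<le> m" "0 < m" "1 < M" "0 \<le> x" "x \<le> 1" "0 \<le> y" "x \<le> M * y"
  shows "(n + (m - n) * x) / (n + (m - n) * y) \<le> m * M / (n * M + m - n)"
proof -
  have "n * (M - 1) \<ge> 0" using assms by simp
  then have R: "n * M + m - n > 0" using assms by (simp add: algebra_simps)
  have D0: "n + (m - n) * y \<ge> 0" using assms by simp
  show ?thesis
  proof (cases "n + (m - n) * y = 0")
    case True then show ?thesis using R assms by simp
  next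
    case False
    then have D: "n + (m - n) * y > 0" using D0 by simp
    have key: "(n + (m - n) * x) * (n * M + m - n) \<le> m * M * (n + (m - n) * y)"
    proof (cases "M * y \<ge> 1")
      case True
      have "(n + (m - n) * x) \<le> m" using assms
        by (smt (verit) mult_left_le)
      then have "(n + (m - n) * x) * (n * M + m - n) \<le> m * (n * M + m - n)"
        using R by (simp add: mult_right_mono)
      also have "\<dots> \<le> m * M * (n + (m - n) * y)"
      proof -
        have "m - n \<le> (m - n) * (M * y)" using True assms
          by (simp add: mult_le_cancel_left1)
        then have "m * (m - n) \<le> m * ((m - n) * (M * y))"
          using assms by (intro mult_left_mono) auto
        then show ?thesis by (simp add: algebra_simps)
      qed
      finally show ?thesis .
    next
      case False
      have "(n + (m - n) * x) \<le> n + (m - n) * (M * y)" using assms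
        by (simp add: mult_left_mono)
      then have "(n + (m - n) * x) * (n * M + m - n) \<le> (n + (m - n) * (M * y)) * (n * M + m - n)"
        using R by (simp add: mult_right_mono)
      also have "\<dots> \<le> m * M * (n + (m - n) * y)"
      proof -
        have "0 \<le> n * (m - n) * (M - 1) * (1 - M * y)" using assms False by simp
        then show ?thesis by (simp add: algebra_simps)
      qed
      finally show ?thesis .
    qed
    show ?thesis using key D R by (simp add: divide_simps mult.commute)
  qed
qed

lemma am_gm_bound:
  fixes m n M :: real
  assumes "0 \<le> n" "n \<le> m" "0 < m" "1 < M"
  shows "m * M / (n * M + m - n) \<le> M powr ((m - n) / m)"
proof -
  define t where "t = n / m"
  have t: "0 \<le> t" "t \<le> 1" using assms by (auto simp: t_def)
  have Y: "M powr t * 1 powr (1 - t) \<le> t * M + (1 - t) * 1"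
    by (rule Youngs_inequality_0) (use t assms in auto)
  have "t * M + (1 - t) = (n * M + m - n) / m"
    using assms by (simp add: t_def field_simps)
  then have e: "m * M / (n * M + m - n) = M / (t * M + (1 - t))"
    using assms by simp
  have p: "M powr ((m - n) / m) = M / M powr t"
    using assms by (simp add: t_def diff_divide_distrib powr_diff)
  have pos: "0 < M powr t" using assms by simp
  have "0 \<le> t * (M - 1)" using t assms by simp
  then have pos2: "0 < t * M + (1 - t)" by (simp add: algebra_simps)
  show ?thesis unfolding e p
    using Y pos pos2 assms by (intro divide_left_mono) auto
qed

lemma out_qsc:
  assumes "P \<in> prob_simplex"
  shows "out_dist (qsc u v) P y = u + (v - u) * P y"
proof -
  have s: "(\<Sum>x\<in>UNIV. P x) = 1" using assms by (simp add: prob_simplex_def)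
  have "\<And>x. P x * qsc u v x y = u * P x + (if x = y then (v - u) * P y else 0)"
    by (auto simp: qsc_def algebra_simps)
  then have "out_dist (qsc u v) P y = (\<Sum>x\<in>UNIV. u * P x + (if x = y then (v - u) * P y else 0))"
    unfolding out_dist_def by simp
  also have "\<dots> = u * (\<Sum>x\<in>UNIV. P x) + (v - u) * P y"
    by (simp add: sum.distrib sum_distrib_left)
  finally show ?thesis using s by simp
qed

lemma exists_ge:
  fixes f g :: "'a::finite \<Rightarrow> real"
  assumes "\<And>y. 0 \<le> f y" "\<And>y. 0 \<le> g y" "sum f UNIV = sum g UNIV" "sum g UNIV > 0"
    and "\<And>y. g y = 0 \<Longrightarrow> f y = 0"
  shows "\<exists>y. g y > 0 \<and> g y \<le> f y"
proof (rule ccontr)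
  assume H: "\<not> ?thesis"
  have le: "\<forall>y\<in>UNIV. f y \<le> g y"
  proof
    fix y :: 'a assume "y \<in> UNIV"
    show "f y \<le> g y"
    proof (cases "g y > 0")
      case True then show ?thesis using H by auto
    next
      case False then have "g y = 0" using assms(2)[of y] by simp
      then show ?thesis using assms(5) by simp
    qed
  qed
  have "\<exists>y. g y > 0"
  proof (rule ccontr)
    assume "\<not> (\<exists>y. g y > 0)"
    then have "\<And>y. g y = 0" using assms(2) by (simp add: not_less order_antisym)
    then show False using assms(4) by simp
  qed
  then obtain y where y: "g y > 0" by blast
  have "f y < g y" using H y by auto
  then have "sum f UNIV < sum g UNIV"
    using le by (intro sum_strict_mono_ex1) auto
  then show False using assms(3) by simp
qed

lemma exists_gt:
  fixes P0 P1 :: "'a::finite \<Rightarrow> real"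
  assumes "P0 \<in> prob_simplex" "P1 \<in> prob_simplex" "P0 \<noteq> P1"
  shows "\<exists>x. P0 x > P1 x"
proof (rule ccontr)
  assume "\<not> ?thesis"
  then have le: "\<And>x. P0 x \<le> P1 x" by (simp add: not_less)
  have "(\<Sum>x\<in>UNIV. P1 x - P0 x) = 0"
    using assms by (simp add: sum_subtractf prob_simplex_def)
  then have "\<forall>x\<in>UNIV. P1 x - P0 x = 0"
    using le by (subst sum_nonneg_eq_0_iff[symmetric]) auto
  then have "P0 = P1" by auto
  then show False using assms by simp
qed

lemma sum_out:
  assumes "P \<in> prob_simplex" "v = 1 - (real CARD('a) - 1) * u"
  shows "(\<Sum>y\<in>(UNIV::'a::finite set). out_dist (qsc u v) P y) = 1"
proof -
  have s: "(\<Sum>x\<in>UNIV. P x) = 1" using assms by (simp add: prob_simplex_def)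
  have "(\<Sum>y\<in>(UNIV::'a set). out_dist (qsc u v) P y) = (\<Sum>y\<in>UNIV. u + (v - u) * P y)"
    using out_qsc[OF assms(1)] by simp
  also have "\<dots> = real CARD('a) * u + (v - u)"
    by (simp add: sum.distrib sum_distrib_left[symmetric] s)
  also have "\<dots> = 1" using assms(2) by (simp add: algebra_simps)
  finally show ?thesis .
qed

lemma ub:
  fixes u v :: real
  assumes u: "0 \<le> u" and v: "0 \<le> v"
    and uv: "v = 1 - (real CARD('a) - 1) * u"
    and adm: "(P0, P1) \<in> (admissible_pairs :: (('a::finite \<Rightarrow> real) \<times> _) set)"
  shows "contraction_ratio (qsc u v) P0 P1 \<le> \<bar>v - u\<bar> / max u v"
proof -
  have P0: "P0 \<in> prob_simplex" and P1: "P1 \<in> prob_simplex" and ne: "P0 \<noteq> P1"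
    and supp: "\<And>x. P1 x = 0 \<Longrightarrow> P0 x = 0"
    using adm by (auto simp: admissible_pairs_def)
  have nn0: "\<And>x. 0 \<le> P0 x" and nn1: "\<And>x. 0 \<le> P1 x"
    using P0 P1 by (auto simp: prob_simplex_def)
  have s0: "sum P0 UNIV = 1" and s1: "sum P1 UNIV = 1"
    using P0 P1 by (auto simp: prob_simplex_def)
  have le10: "\<And>x. P0 x \<le> 1"
    using s0 nn0 by (metis member_le_sum finite UNIV_I)
  have le11: "\<And>x. P1 x \<le> 1"
    using s1 nn1 by (metis member_le_sum finite UNIV_I)
  define M where "M = Max ((\<lambda>x. P0 x / P1 x) ` UNIV)"
  have Mge: "\<And>x. P0 x / P1 x \<le> M" unfolding M_def by (intro Max_ge) auto
  have PM: "\<And>x. P0 x \<le> M * P1 x"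
  proof -
    fix x
    show "P0 x \<le> M * P1 x"
    proof (cases "P1 x = 0")
      case True then show ?thesis using supp by simp
    next
      case False then have "P1 x > 0" using nn1[of x] by simp
      then show ?thesis using Mge[of x] by (simp add: pos_divide_le_eq mult.commute)
    qed
  qed
  obtain x where x: "P0 x > P1 x" using exists_gt[OF P0 P1 ne] by blast
  have "P1 x \<noteq> 0" using x supp by fastforce
  then have "P1 x > 0" using nn1[of x] by simp
  then have "P0 x / P1 x > 1" using x by simp
  then have M1: "M > 1" using Mge[of x] by simp
  have PM': "\<And>y. 1 - P0 y \<le> M * (1 - P1 y)"
  proof -
    fix y
    have "1 - P0 y = sum P0 (UNIV - {y})" using s0 by (simp add: sum_diff1)
    also have "\<dots> \<le> sum (\<lambda>x. M * P1 x) (UNIV - {y})" by (intro sum_mono PM)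
    also have "\<dots> = M * (1 - P1 y)" using s1 by (simp add: sum_distrib_left[symmetric] sum_diff1)
    finally show "1 - P0 y \<le> M * (1 - P1 y)" .
  qed
  define m where "m = max u v"
  define n where "n = min u v"
  have m0: "m > 0" using u v uv by (cases "u > 0") (auto simp: m_def)
  have nm: "0 \<le> n" "n \<le> m" using u v by (auto simp: m_def n_def)
  have c: "\<bar>v - u\<bar> / max u v = (m - n) / m" by (auto simp: m_def n_def)
  define Q0 where "Q0 = out_dist (qsc u v) P0"
  define Q1 where "Q1 = out_dist (qsc u v) P1"
  have Q0: "\<And>y. Q0 y = u + (v - u) * P0 y" unfolding Q0_def by (rule out_qsc[OF P0])
  have Q1: "\<And>y. Q1 y = u + (v - u) * P1 y" unfolding Q1_def by (rule out_qsc[OF P1])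
  have bnd: "\<And>y. Q0 y / Q1 y \<le> m * M / (n * M + m - n)"
  proof -
    fix y
    show "Q0 y / Q1 y \<le> m * M / (n * M + m - n)"
    proof (cases "u \<le> v")
      case True
      then have "m = v" "n = u" by (auto simp: m_def n_def)
      then show ?thesis unfolding Q0 Q1
        using pt_bound[OF nm m0 M1 nn0[of y] le10[of y] nn1[of y] PM[of y]] by simp
    next
      case False
      then have mn: "m = u" "n = v" by (auto simp: m_def n_def)
      have e: "\<And>p. u + (v - u) * p = n + (m - n) * (1 - p)" unfolding mn by (simp add: algebra_simps)
      have a1: "0 \<le> 1 - P0 y" using le10[of y] by simp
      have a2: "1 - P0 y \<le> 1" using nn0[of y] by simp
      have a3: "0 \<le> 1 - P1 y" using le11[of y] by simp
      show ?thesis unfolding Q0 Q1 e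
        using pt_bound[OF nm m0 M1 a1 a2 a3 PM'[of y]] .
    qed
  qed
  define MQ where "MQ = Max ((\<lambda>y. Q0 y / Q1 y) ` UNIV)"
  have MQle: "MQ \<le> M powr ((m - n) / m)"
    unfolding MQ_def using bnd am_gm_bound[OF nm m0 M1] by (auto intro: order_trans)
  have W0: "\<And>x y. 0 \<le> qsc u v x y" using u v by (simp add: qsc_def)
  have Qnn0: "\<And>y. 0 \<le> Q0 y"
    unfolding Q0_def out_dist_def using W0 nn0 by (intro sum_nonneg mult_nonneg_nonneg) auto
  have Qnn1: "\<And>y. 0 \<le> Q1 y"
    unfolding Q1_def out_dist_def using W0 nn1 by (intro sum_nonneg mult_nonneg_nonneg) auto
  have Qsupp: "\<And>y. Q1 y = 0 \<Longrightarrow> Q0 y = 0"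
  proof -
    fix y assume "Q1 y = 0"
    moreover have "\<forall>x\<in>UNIV. 0 \<le> P1 x * qsc u v x y"
    proof
      fix x :: 'a assume "x \<in> UNIV"
      show "0 \<le> P1 x * qsc u v x y" using W0[of x y] nn1[of x] by (rule mult_nonneg_nonneg[rotated])
    qed
    ultimately have "\<forall>x\<in>UNIV. P1 x * qsc u v x y = 0"
      unfolding Q1_def out_dist_def using sum_nonneg_eq_0_iff[of UNIV "\<lambda>x. P1 x * qsc u v x y"] by simp
    then have "\<forall>x\<in>UNIV. P0 x * qsc u v x y = 0"
      by (metis mult_eq_0_iff supp)
    then show "Q0 y = 0" unfolding Q0_def out_dist_def by (rule sum.neutral)
  qed
  have sQ0: "sum Q0 UNIV = 1" unfolding Q0_def using sum_out[OF P0 uv] by simp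
  have sQ1: "sum Q1 UNIV = 1" unfolding Q1_def using sum_out[OF P1 uv] by simp
  obtain y where y: "Q1 y > 0" "Q1 y \<le> Q0 y"
    using exists_ge[of Q0 Q1, OF Qnn0 Qnn1] sQ0 sQ1 Qsupp by auto
  have "1 \<le> Q0 y / Q1 y" using y by simp
  also have "\<dots> \<le> MQ" unfolding MQ_def by (intro Max_ge) auto
  finally have MQ1: "1 \<le> MQ" .
  have "Dinf Q0 Q1 = ln MQ" by (simp add: Dinf_def MQ_def)
  also have "\<dots> \<le> ln (M powr ((m - n) / m))" using MQ1 MQle M1 by (subst ln_le_cancel_iff) auto
  also have "\<dots> = (m - n) / m * ln M" using M1 by (simp add: ln_powr)
  finally have DQ: "Dinf Q0 Q1 \<le> (m - n) / m * ln M" .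
  have DP: "Dinf P0 P1 = ln M" by (simp add: Dinf_def M_def)
  have lnM: "ln M > 0" using M1 by simp
  show ?thesis unfolding contraction_ratio_def c
    using DQ lnM by (simp add: DP Q0_def[symmetric] Q1_def[symmetric] pos_divide_le_eq)
qed

lemma seq_lb:
  fixes x0 x1 :: "'a::finite" and h u v :: real
  assumes x01: "x0 \<noteq> x1" and h: "0 < h" "h \<le> 1/2"
    and u: "0 \<le> u" and v: "0 \<le> v"
    and uv: "v = 1 - (real CARD('a) - 1) * u"
    and P0def: "P0 = (\<lambda>x. if x = x0 then 1 else 0)"
    and P1def: "P1 = (\<lambda>x. (if x = x0 then 1 - h else 0) + (if x = x1 then h else 0))"
  shows "(P0, P1) \<in> admissible_pairs \<and>
    \<bar>v - u\<bar> / max u v * (1 - h) \<le> contraction_ratio (qsc u v) P0 P1"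
proof -
  have P0: "P0 \<in> prob_simplex" unfolding P0def prob_simplex_def by simp
  have P1: "P1 \<in> prob_simplex" unfolding P1def prob_simplex_def
    using h by (simp add: sum.distrib)
  have P0x0: "P0 x0 = 1" and P1x0: "P1 x0 = 1 - h" and P0x1: "P0 x1 = 0" and P1x1: "P1 x1 = h"
    using x01 by (auto simp: P0def P1def)
  have ne: "P0 \<noteq> P1" using P0x0 P1x0 h by auto
  have supp: "\<forall>x. P1 x = 0 \<longrightarrow> P0 x = 0"
    using P1x0 h by (auto simp: P0def)
  have adm: "(P0, P1) \<in> admissible_pairs"
    using P0 P1 ne supp by (simp add: admissible_pairs_def)
  have Mx: "Max ((\<lambda>x. P0 x / P1 x) ` UNIV) = 1 / (1 - h)"
  proof (rule Max_eqI)
    show "finite ((\<lambda>x. P0 x / P1 x) ` UNIV)" by simp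
    show "1 / (1 - h) \<in> (\<lambda>x. P0 x / P1 x) ` UNIV"
      using P0x0 P1x0 by (auto intro!: image_eqI[of _ _ x0])
    fix z assume "z \<in> (\<lambda>x. P0 x / P1 x) ` UNIV"
    then obtain x where z: "z = P0 x / P1 x" by auto
    show "z \<le> 1 / (1 - h)"
      using h P0x0 P1x0 by (cases "x = x0") (auto simp: z P0def)
  qed
  have DP: "Dinf P0 P1 = ln (1 / (1 - h))" by (simp add: Dinf_def Mx)
  have h1: "1 - h > 0" using h by simp
  have DPpos: "0 < ln (1 / (1 - h))" using h by simp
  have DPle: "ln (1 / (1 - h)) \<le> h / (1 - h)"
  proof -
    have "ln (1 / (1 - h)) \<le> 1 / (1 - h) - 1" using h1 by (intro ln_le_minus_one) simp
    also have "\<dots> = h / (1 - h)" using h1 by (simp add: field_simps)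
    finally show ?thesis .
  qed
  define m where "m = max u v"
  define n where "n = min u v"
  have m0: "m > 0" using u v uv by (cases "u > 0") (auto simp: m_def)
  have nm: "0 \<le> n" "n \<le> m" using u v by (auto simp: m_def n_def)
  define c where "c = (m - n) / m"
  have cdef: "\<bar>v - u\<bar> / max u v = c" by (auto simp: m_def n_def c_def)
  have c01: "0 \<le> c" "c \<le> 1" using nm m0 by (auto simp: c_def)
  have "c * h \<le> 1 * h" using c01 h by (intro mult_right_mono) auto
  then have ch: "0 \<le> c * h" "c * h < 1" using c01 h by (simp, linarith)
  define Q0 where "Q0 = out_dist (qsc u v) P0"
  define Q1 where "Q1 = out_dist (qsc u v) P1"
  have Q0: "\<And>y. Q0 y = u + (v - u) * P0 y" unfolding Q0_def by (rule out_qsc[OF P0])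
  have Q1: "\<And>y. Q1 y = u + (v - u) * P1 y" unfolding Q1_def by (rule out_qsc[OF P1])
  have "\<exists>y. Q0 y / Q1 y = 1 / (1 - c * h)"
  proof (cases "u \<le> v")
    case True
    then have mn: "m = v" "n = u" by (auto simp: m_def n_def)
    have "Q0 x0 / Q1 x0 = 1 / (1 - c * h)"
      unfolding Q0 Q1 P0x0 P1x0 c_def mn using m0 unfolding mn
      by (simp add: field_simps)
    then show ?thesis by blast
  next
    case False
    then have mn: "m = u" "n = v" by (auto simp: m_def n_def)
    have "Q0 x1 / Q1 x1 = 1 / (1 - c * h)"
      unfolding Q0 Q1 P0x1 P1x1 c_def mn using m0 unfolding mn
      by (simp add: field_simps)
    then show ?thesis by blast
  qed
  then obtain y where y: "Q0 y / Q1 y = 1 / (1 - c * h)" by blast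
  define MQ where "MQ = Max ((\<lambda>y. Q0 y / Q1 y) ` UNIV)"
  have ge: "1 / (1 - c * h) \<le> MQ" unfolding MQ_def y[symmetric] by (intro Max_ge) auto
  have pos: "0 < 1 / (1 - c * h)" using ch by simp
  have MQpos: "0 < MQ" using ge pos by linarith
  have "ln (1 / (1 - c * h)) \<le> ln MQ"
    using ln_le_cancel_iff[OF pos MQpos] ge by simp
  moreover have "c * h \<le> ln (1 / (1 - c * h))"
    using ln_one_minus_pos_upper_bound[OF ch] ch by (simp add: ln_div)
  ultimately have DQ: "c * h \<le> Dinf Q0 Q1" by (simp add: Dinf_def MQ_def)
  have "c * (1 - h) = c * h / (h / (1 - h))" using h h1 by (simp add: field_simps)
  also have "\<dots> \<le> c * h / ln (1 / (1 - h))"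
    using DPpos DPle ch h h1 by (intro divide_left_mono) auto
  also have "\<dots> \<le> Dinf Q0 Q1 / Dinf P0 P1"
    unfolding DP using DQ DPpos by (intro divide_right_mono) auto
  finally show ?thesis using adm
    by (simp add: cdef contraction_ratio_def Q0_def Q1_def)
qed


theorem theorem4p5:
  fixes u v :: real and W :: "'a::finite \<Rightarrow> 'a \<Rightarrow> real"
  assumes q: "CARD('a) \<ge> 2"
    and u: "0 \<le> u" "u \<le> 1" and v: "0 \<le> v" "v \<le> 1"
    and uv: "v = 1 - (real CARD('a) - 1) * u"
    and W: "W = qsc u v"
  shows "eta_inf W = \<bar>v - u\<bar> / max u v
    \<and> (\<exists>x0 x1 :: 'a. x0 \<noteq> x1 \<and>
         (\<exists>P0 P1 :: nat \<Rightarrow> 'a \<Rightarrow> real.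
            (\<forall>n. (P0 n, P1 n) \<in> admissible_pairs
                 \<and> (\<forall>x. x \<notin> {x0, x1} \<longrightarrow> P0 n x = 0 \<and> P1 n x = 0))
          \<and> (\<forall>x. (\<lambda>n. P0 n x) \<longlonglongrightarrow> (if x = x0 then 1 else 0))
          \<and> (\<forall>x. (\<lambda>n. P1 n x) \<longlonglongrightarrow> (if x = x0 then 1 else 0))
          \<and> (\<lambda>n. contraction_ratio W (P0 n) (P1 n)) \<longlonglongrightarrow> \<bar>v - u\<bar> / max u v))"
proof -
  define c where "c = \<bar>v - u\<bar> / max u v"
  obtain x0 :: 'a where True by simp
  have "UNIV \<noteq> {x0}"
  proof
    assume "UNIV = {x0}"
    then have "CARD('a) = card {x0}" by (metis)
    then have "CARD('a) = 1" by simp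
    then show False using q by simp
  qed
  have "\<exists>x1::'a. x0 \<noteq> x1"
  proof (rule ccontr)
    assume "\<not> (\<exists>x1::'a. x0 \<noteq> x1)"
    then have "UNIV = {x0}" by auto
    then show False using \<open>UNIV \<noteq> {x0}\<close> by simp
  qed
  then obtain x1 :: 'a where x01: "x0 \<noteq> x1" by blast
  define h :: "nat \<Rightarrow> real" where "h n = inverse (real (Suc n)) / 2" for n
  have h: "0 < h n" "h n \<le> 1/2" for n
    by (auto simp: h_def field_simps)
  have hlim: "h \<longlonglongrightarrow> 0"
    unfolding h_def by (intro tendsto_divide_zero LIMSEQ_inverse_real_of_nat)
  define P0 :: "nat \<Rightarrow> 'a \<Rightarrow> real" where "P0 n = (\<lambda>x. if x = x0 then 1 else 0)" for n
  define P1 :: "nat \<Rightarrow> 'a \<Rightarrow> real" where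
    "P1 n = (\<lambda>x. (if x = x0 then 1 - h n else 0) + (if x = x1 then h n else 0))" for n
  have L: "(P0 n, P1 n) \<in> admissible_pairs \<and> c * (1 - h n) \<le> contraction_ratio W (P0 n) (P1 n)" for n
    unfolding W c_def by (rule seq_lb[OF x01 h u(1) v(1) uv]) (simp_all add: P0_def P1_def)
  have U: "contraction_ratio W (fst PP) (snd PP) \<le> c" if "PP \<in> admissible_pairs" for PP
    unfolding W c_def using ub[OF u(1) v(1) uv, of "fst PP" "snd PP"] that by simp
  have bdd: "bdd_above ((\<lambda>PP. contraction_ratio W (fst PP) (snd PP)) ` admissible_pairs)"
    by (rule bdd_aboveI2[where M=c]) (rule U)
  have lim: "(\<lambda>n. contraction_ratio W (P0 n) (P1 n)) \<longlonglongrightarrow> c"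
  proof (rule tendsto_sandwich[of "\<lambda>n. c * (1 - h n)" _ _ "\<lambda>n. c"])
    show "\<forall>\<^sub>F n in sequentially. c * (1 - h n) \<le> contraction_ratio W (P0 n) (P1 n)"
      using L by simp
    show "\<forall>\<^sub>F n in sequentially. contraction_ratio W (P0 n) (P1 n) \<le> c"
    proof (rule always_eventually, rule allI)
      fix n
      show "contraction_ratio W (P0 n) (P1 n) \<le> c"
        using U[of "(P0 n, P1 n)"] L[of n] by simp
    qed
    show "(\<lambda>n. c * (1 - h n)) \<longlonglongrightarrow> c"
      using tendsto_mult[OF tendsto_const tendsto_diff[OF tendsto_const hlim], of c 1] by simp
    show "(\<lambda>n. c) \<longlonglongrightarrow> c" by simp
  qed
  have a0: "(P0 0, P1 0) \<in> admissible_pairs" using L[of 0] by (rule conjunct1)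
  have ne: "(admissible_pairs :: (('a \<Rightarrow> real) \<times> ('a \<Rightarrow> real)) set) \<noteq> {}"
    using a0 by blast
  have eta: "eta_inf W = c"
  proof (rule antisym)
    show "eta_inf W \<le> c" unfolding eta_inf_def by (rule cSUP_least[OF ne]) (rule U)
    have "contraction_ratio W (P0 n) (P1 n) \<le> eta_inf W" for n
      unfolding eta_inf_def using cSUP_upper[OF conjunct1[OF L[of n]] bdd] by simp
    then show "c \<le> eta_inf W" by (intro LIMSEQ_le_const2[OF lim]) blast
  qed
  have supp: "\<forall>n. (P0 n, P1 n) \<in> admissible_pairs
                 \<and> (\<forall>x. x \<notin> {x0, x1} \<longrightarrow> P0 n x = 0 \<and> P1 n x = 0)"
  proof (rule allI, rule conjI)
    fix n
    show "(P0 n, P1 n) \<in> admissible_pairs" using L[of n] by (rule conjunct1)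
    show "\<forall>x. x \<notin> {x0, x1} \<longrightarrow> P0 n x = 0 \<and> P1 n x = 0"
      by (simp add: P0_def P1_def)
  qed
  have c0: "\<forall>x. (\<lambda>n. P0 n x) \<longlonglongrightarrow> (if x = x0 then 1 else 0)"
    by (simp add: P0_def)
  have c1: "(\<lambda>n. P1 n x) \<longlonglongrightarrow> (if x = x0 then 1 else 0)" for x
  proof (cases "x = x0")
    case True
    then show ?thesis using x01 tendsto_diff[OF tendsto_const hlim, of 1] by (simp add: P1_def)
  next
    case False
    show ?thesis
    proof (cases "x = x1")
      case True
      then show ?thesis using x01 hlim by (simp add: P1_def)
    next
      case False
      then show ?thesis using \<open>x \<noteq> x0\<close> by (simp add: P1_def)
    qed
  qed
  show ?thesis unfolding c_def[symmetric] eta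
    using x01 supp c0 c1 lim by blast
qed

end
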